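(* Let $E_{i,j}$ ($i,j\in\mathbb N$) be the standard matrix units in $B(\ell^2(\mathbb N))$, let $\mathcal K_0$ be the norm closed linear span of $\{E_{i,j}:(i,j)\neq(1,1)\}$, and let $\mathcal S_0=\{\lambda I+K_0:\lambda\in\mathbb C,\ K_0\in\mathcal K_0\}\subseteq B(\ell^2(\mathbb N))$ with the operator system structure inherited from $B(\ell^2(\mathbb N))$. Then $\mathcal S_0$ (which is a nuclear operator system) is not unitally completely order isomorphic to any unital $C^*$-algebra.
   Context: An operator system $\mathcal S$ is nuclear if $\mathcal S\otimes_{\min}\mathcal T=\mathcal S\otimes_{\max}\mathcal T$ for every operator system $\mathcal T$, where $\min$ and $\max$ denote the minimal and maximal operator system tensor products (in the sense of Kavruk–Paulsen–Todorov–Tomforde). *)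

theory Defs
  imports Complex_Main
begin

text \<open>Operators are represented extensionally: they map l2 into l2 and send
  every non-l2 function to 0, so that equality of functions is equality of operators.\<close>

definition l2 :: "(nat \<Rightarrow> complex) set" where
  "l2 = {f. summable (\<lambda>n. (cmod (f n))^2)}"

definition l2_inner :: "(nat \<Rightarrow> complex) \<Rightarrow> (nat \<Rightarrow> complex) \<Rightarrow> complex" where
  "l2_inner f g = (\<Sum>n. f n * cnj (g n))"

definition l2_norm :: "(nat \<Rightarrow> complex) \<Rightarrow> real" where
  "l2_norm f = sqrt (\<Sum>n. (cmod (f n))^2)"

type_synonym op = "(nat \<Rightarrow> complex) \<Rightarrow> (nat \<Rightarrow> complex)"

definition bounded_op :: "op \<Rightarrow> bool" where
  "bounded_op T \<longleftrightarrow>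
     (\<forall>f\<in>l2. T f \<in> l2) \<and>
     (\<forall>f\<in>l2. \<forall>g\<in>l2. T (\<lambda>n. f n + g n) = (\<lambda>n. T f n + T g n)) \<and>
     (\<forall>c. \<forall>f\<in>l2. T (\<lambda>n. c * f n) = (\<lambda>n. c * T f n)) \<and>
     (\<exists>C. \<forall>f\<in>l2. l2_norm (T f) \<le> C * l2_norm f) \<and>
     (\<forall>f. f \<notin> l2 \<longrightarrow> T f = (\<lambda>_. 0))"

definition op_norm :: "op \<Rightarrow> real" where
  "op_norm T = Sup {l2_norm (T f) | f. f \<in> l2 \<and> l2_norm f \<le> 1}"

definition id_op :: op where
  "id_op = (\<lambda>f. if f \<in> l2 then f else (\<lambda>_. 0))"

text \<open>Matrix unit E_{i,j}: E_{i,j} e_j = e_i (0-based indices).\<close>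
definition mat_unit :: "nat \<Rightarrow> nat \<Rightarrow> op" where
  "mat_unit i j = (\<lambda>f. if f \<in> l2 then (\<lambda>k. if k = i then f j else 0) else (\<lambda>_. 0))"

definition K0_span :: "op set" where
  "K0_span = {T. \<exists>F c. finite F \<and> (0,0) \<notin> F \<and>
      T = (\<lambda>f n. \<Sum>p\<in>F. c p * mat_unit (fst p) (snd p) f n)}"

definition K0 :: "op set" where
  "K0 = {T. bounded_op T \<and>
      (\<forall>e>0. \<exists>S\<in>K0_span. op_norm (\<lambda>f n. T f n - S f n) < e)}"

definition S0 :: "op set" where
  "S0 = {T. \<exists>c K. K \<in> K0 \<and> T = (\<lambda>f n. c * id_op f n + K f n)}"

text \<open>Positivity in M_n(B(l2)) = B(l2^n): the quadratic form is real and nonnegative.\<close>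
definition op_mat_pos :: "nat \<Rightarrow> (nat \<Rightarrow> nat \<Rightarrow> op) \<Rightarrow> bool" where
  "op_mat_pos n X \<longleftrightarrow>
     (\<forall>x. (\<forall>k<n. x k \<in> l2) \<longrightarrow>
        (let s = (\<Sum>i<n. \<Sum>j<n. l2_inner (X i j (x j)) (x i)) in Im s = 0 \<and> Re s \<ge> 0))"

record 'a cstar_alg =
  carr :: "'a set"
  add :: "'a \<Rightarrow> 'a \<Rightarrow> 'a"
  mul :: "'a \<Rightarrow> 'a \<Rightarrow> 'a"
  scale :: "complex \<Rightarrow> 'a \<Rightarrow> 'a"
  star :: "'a \<Rightarrow> 'a"
  nrm :: "'a \<Rightarrow> real"
  zero :: 'a
  one :: 'a

definition unital_cstar_algebra :: "'a cstar_alg \<Rightarrow> bool" where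
  "unital_cstar_algebra A \<longleftrightarrow>
    zero A \<in> carr A \<and> one A \<in> carr A \<and>
    (\<forall>x\<in>carr A. \<forall>y\<in>carr A. add A x y \<in> carr A \<and> mul A x y \<in> carr A) \<and>
    (\<forall>c. \<forall>x\<in>carr A. scale A c x \<in> carr A) \<and>
    (\<forall>x\<in>carr A. star A x \<in> carr A) \<and>
    \<comment> \<open>complex vector space\<close>
    (\<forall>x\<in>carr A. \<forall>y\<in>carr A. \<forall>z\<in>carr A. add A (add A x y) z = add A x (add A y z)) \<and>
    (\<forall>x\<in>carr A. \<forall>y\<in>carr A. add A x y = add A y x) \<and>
    (\<forall>x\<in>carr A. add A x (zero A) = x) \<and>
    (\<forall>x\<in>carr A. add A x (scale A (-1) x) = zero A) \<and>
    (\<forall>x\<in>carr A. scale A 1 x = x) \<and>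
    (\<forall>a b. \<forall>x\<in>carr A. scale A a (scale A b x) = scale A (a * b) x) \<and>
    (\<forall>a b. \<forall>x\<in>carr A. scale A (a + b) x = add A (scale A a x) (scale A b x)) \<and>
    (\<forall>a. \<forall>x\<in>carr A. \<forall>y\<in>carr A. scale A a (add A x y) = add A (scale A a x) (scale A a y)) \<and>
    \<comment> \<open>unital associative algebra\<close>
    (\<forall>x\<in>carr A. \<forall>y\<in>carr A. \<forall>z\<in>carr A. mul A (mul A x y) z = mul A x (mul A y z)) \<and>
    (\<forall>x\<in>carr A. \<forall>y\<in>carr A. \<forall>z\<in>carr A.
        mul A x (add A y z) = add A (mul A x y) (mul A x z) \<and>
        mul A (add A x y) z = add A (mul A x z) (mul A y z)) \<and>
    (\<forall>a. \<forall>x\<in>carr A. \<forall>y\<in>carr A.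
        mul A (scale A a x) y = scale A a (mul A x y) \<and> mul A x (scale A a y) = scale A a (mul A x y)) \<and>
    (\<forall>x\<in>carr A. mul A (one A) x = x \<and> mul A x (one A) = x) \<and>
    \<comment> \<open>submultiplicative norm\<close>
    (\<forall>x\<in>carr A. nrm A x \<ge> 0 \<and> (nrm A x = 0 \<longleftrightarrow> x = zero A)) \<and>
    (\<forall>x\<in>carr A. \<forall>y\<in>carr A. nrm A (add A x y) \<le> nrm A x + nrm A y) \<and>
    (\<forall>a. \<forall>x\<in>carr A. nrm A (scale A a x) = cmod a * nrm A x) \<and>
    (\<forall>x\<in>carr A. \<forall>y\<in>carr A. nrm A (mul A x y) \<le> nrm A x * nrm A y) \<and>
    \<comment> \<open>completeness\<close>
    (\<forall>X::nat \<Rightarrow> 'a. (\<forall>n. X n \<in> carr A) \<longrightarrow>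
        (\<forall>e>0. \<exists>N. \<forall>m\<ge>N. \<forall>k\<ge>N. nrm A (add A (X m) (scale A (-1) (X k))) < e) \<longrightarrow>
        (\<exists>L\<in>carr A. \<forall>e>0. \<exists>N. \<forall>m\<ge>N. nrm A (add A (X m) (scale A (-1) L)) < e)) \<and>
    \<comment> \<open>involution and C*-identity\<close>
    (\<forall>x\<in>carr A. star A (star A x) = x) \<and>
    (\<forall>x\<in>carr A. \<forall>y\<in>carr A. star A (add A x y) = add A (star A x) (star A y)) \<and>
    (\<forall>a. \<forall>x\<in>carr A. star A (scale A a x) = scale A (cnj a) (star A x)) \<and>
    (\<forall>x\<in>carr A. \<forall>y\<in>carr A. star A (mul A x y) = mul A (star A y) (star A x)) \<and>
    (\<forall>x\<in>carr A. nrm A (mul A (star A x) x) = (nrm A x)^2)"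

primrec asum :: "'a cstar_alg \<Rightarrow> (nat \<Rightarrow> 'a) \<Rightarrow> nat \<Rightarrow> 'a" where
  "asum A f 0 = zero A"
| "asum A f (Suc n) = add A (asum A f n) (f n)"

text \<open>Positive elements of the C*-algebra M_n(A): those of the form Y* Y.\<close>
definition cstar_mat_pos :: "'a cstar_alg \<Rightarrow> nat \<Rightarrow> (nat \<Rightarrow> nat \<Rightarrow> 'a) \<Rightarrow> bool" where
  "cstar_mat_pos A n X \<longleftrightarrow>
     (\<exists>Y. (\<forall>i<n. \<forall>j<n. Y i j \<in> carr A) \<and>
          (\<forall>i<n. \<forall>j<n. X i j = asum A (\<lambda>k. mul A (star A (Y k i)) (Y k j)) n))"

definition ucoi_S0 :: "(op \<Rightarrow> 'a) \<Rightarrow> 'a cstar_alg \<Rightarrow> bool" where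
  "ucoi_S0 phi A \<longleftrightarrow>
     phi ` S0 = carr A \<and> inj_on phi S0 \<and>
     (\<forall>c. \<forall>S\<in>S0. \<forall>T\<in>S0. phi (\<lambda>f n. c * S f n + T f n) = add A (scale A c (phi S)) (phi T)) \<and>
     phi id_op = one A \<and>
     (\<forall>n X. (\<forall>i<n. \<forall>j<n. X i j \<in> S0) \<longrightarrow>
        (op_mat_pos n X \<longleftrightarrow> cstar_mat_pos A n (\<lambda>i j. phi (X i j))))"

end

theory Submission
  imports Defs
begin


definition ev :: "nat \<Rightarrow> complex \<Rightarrow> nat \<Rightarrow> complex" where
  "ev k v = (\<lambda>n. if n = k then v else 0)"

lemma l2_sum_nonneg: "0 \<le> (\<Sum>n. (cmod (f n))^2)" if "f \<in> l2"
proof -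
  have "summable (\<lambda>n. (cmod (f n))^2)" using that unfolding l2_def by simp
  thus ?thesis by (rule suminf_nonneg) simp
qed

lemma l2_norm_nonneg: "f \<in> l2 \<Longrightarrow> 0 \<le> l2_norm f"
  unfolding l2_norm_def using l2_sum_nonneg by simp

lemma inner_summable: assumes "f \<in> l2" "g \<in> l2"
  shows "summable (\<lambda>n. f n * cnj (g n))"
proof -
  have sf: "summable (\<lambda>n. (cmod (f n))^2)" and sg: "summable (\<lambda>n. (cmod (g n))^2)"
    using assms unfolding l2_def by auto
  have S: "summable (\<lambda>n. (cmod (f n))^2 + (cmod (g n))^2)" using sf sg by (rule summable_add)
  have bnd: "norm (f n * cnj (g n)) \<le> (cmod (f n))^2 + (cmod (g n))^2" for n
  proof -
    have e: "norm (f n * cnj (g n)) = cmod (f n) * cmod (g n)" by (simp add: norm_mult)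
    have "2 * cmod (f n) * cmod (g n) \<le> (cmod (f n))^2 + (cmod (g n))^2" by (rule sum_squares_bound)
    moreover have "0 \<le> cmod (f n) * cmod (g n)" by simp
    ultimately show ?thesis unfolding e by linarith
  qed
  have "\<forall>n\<ge>0. norm (f n * cnj (g n)) \<le> (cmod (f n))^2 + (cmod (g n))^2" using bnd by blast
  thus ?thesis by (intro summable_comparison_test[OF exI[of _ 0] S])
qed

lemma l2_add:
  assumes "u \<in> l2" "v \<in> l2"
  shows "(\<lambda>n. u n + v n) \<in> l2 \<and> l2_norm (\<lambda>n. u n + v n) \<le> 2 * (l2_norm u + l2_norm v)"
proof -
  have su: "summable (\<lambda>n. (cmod (u n))^2)" and sv: "summable (\<lambda>n. (cmod (v n))^2)"
    using assms unfolding l2_def by auto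
  have pt: "(cmod (u n + v n))^2 \<le> 2 * (cmod (u n))^2 + 2 * (cmod (v n))^2" for n
  proof -
    have "cmod (u n + v n) \<le> cmod (u n) + cmod (v n)" by (rule norm_triangle_ineq)
    hence "(cmod (u n + v n))^2 \<le> (cmod (u n) + cmod (v n))^2"
      by (rule power_mono) simp
    moreover have "(cmod (u n) + cmod (v n))^2 = (cmod (u n))^2 + (cmod (v n))^2 + 2 * cmod (u n) * cmod (v n)"
      by (rule power2_sum)
    moreover have "2 * cmod (u n) * cmod (v n) \<le> (cmod (u n))^2 + (cmod (v n))^2" by (rule sum_squares_bound)
    ultimately show ?thesis by linarith
  qed
  have s2: "summable (\<lambda>n. 2 * (cmod (u n))^2 + 2 * (cmod (v n))^2)"
    using su sv by (intro summable_add summable_mult)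
  have s: "summable (\<lambda>n. (cmod (u n + v n))^2)"
    by (rule summable_comparison_test[OF _ s2]) (use pt in auto)
  have "(\<Sum>n. (cmod (u n + v n))^2) \<le> (\<Sum>n. 2 * (cmod (u n))^2 + 2 * (cmod (v n))^2)"
    by (rule suminf_le[OF pt s s2])
  also have "\<dots> = 2 * (\<Sum>n. (cmod (u n))^2) + 2 * (\<Sum>n. (cmod (v n))^2)"
    using su sv by (simp add: suminf_add[symmetric] suminf_mult summable_mult)
  finally have le: "(\<Sum>n. (cmod (u n + v n))^2) \<le> 2 * (\<Sum>n. (cmod (u n))^2) + 2 * (\<Sum>n. (cmod (v n))^2)" .
  define P where "P = (\<Sum>n. (cmod (u n))^2)"
  define Q where "Q = (\<Sum>n. (cmod (v n))^2)"
  have P0: "0 \<le> P" and Q0: "0 \<le> Q" unfolding P_def Q_def using su sv by (simp_all add: suminf_nonneg)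
  have "2 * P + 2 * Q \<le> (2 * (sqrt P + sqrt Q))^2"
  proof -
    have e0: "\<And>a b::real. (2*(a+b))^2 = 4*a^2 + 4*b^2 + 8*(a*b)"
      by (simp add: power2_eq_square algebra_simps)
    have e: "(2*(sqrt P + sqrt Q))^2 = 4*(sqrt P)^2 + 4*(sqrt Q)^2 + 8*(sqrt P*sqrt Q)"
      by (rule e0)
    have "(sqrt P)^2 = P" "(sqrt Q)^2 = Q" using P0 Q0 by simp_all
    moreover have "0 \<le> sqrt P * sqrt Q" using P0 Q0 by simp
    ultimately show ?thesis unfolding e using P0 Q0 by linarith
  qed
  hence "l2_norm (\<lambda>n. u n + v n) \<le> 2 * (sqrt P + sqrt Q)"
    unfolding l2_norm_def using le P0 Q0 unfolding P_def Q_def by (intro real_le_lsqrt) auto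
  thus ?thesis using s unfolding l2_def l2_norm_def P_def Q_def by auto
qed

lemma l2_scale:
  assumes "u \<in> l2"
  shows "(\<lambda>n. c * u n) \<in> l2 \<and> l2_norm (\<lambda>n. c * u n) = cmod c * l2_norm u"
proof -
  have su: "summable (\<lambda>n. (cmod (u n))^2)" using assms unfolding l2_def by auto
  have eq: "(\<lambda>n. (cmod (c * u n))^2) = (\<lambda>n. (cmod c)^2 * (cmod (u n))^2)"
    by (simp add: norm_mult power_mult_distrib)
  have "summable (\<lambda>n. (cmod (c * u n))^2)" unfolding eq using su by (rule summable_mult)
  moreover have "l2_norm (\<lambda>n. c * u n) = cmod c * l2_norm u"
    unfolding l2_norm_def eq using su by (simp add: suminf_mult real_sqrt_mult)
  ultimately show ?thesis unfolding l2_def by simp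
qed

lemma ev_l2: "ev k v \<in> l2 \<and> l2_norm (ev k v) = cmod v"
proof -
  have "(\<lambda>n. (cmod (ev k v n))^2) = (\<lambda>n. if n = k then (cmod v)^2 else 0)"
    unfolding ev_def by auto
  moreover have "(\<lambda>n. if n = k then (cmod v)^2 else 0) sums (cmod v)^2"
    using sums_single[of k "\<lambda>_. (cmod v)^2"] by simp
  ultimately show ?thesis unfolding l2_def l2_norm_def by (auto simp: sums_iff)
qed

lemma zero_l2: "(\<lambda>n. 0) \<in> l2 \<and> l2_norm (\<lambda>n. 0) = 0"
  unfolding l2_def l2_norm_def by simp

lemma l2_coord: assumes "u \<in> l2" shows "cmod (u k) \<le> l2_norm u"
proof -
  have su: "summable (\<lambda>n. (cmod (u n))^2)" using assms unfolding l2_def by auto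
  have "(\<Sum>n\<in>{k}. (cmod (u n))^2) \<le> (\<Sum>n. (cmod (u n))^2)"
    by (rule sum_le_suminf[OF su]) auto
  thus ?thesis unfolding l2_norm_def by (intro real_le_rsqrt) simp
qed

lemma l2_two: assumes "u \<in> l2" "a \<noteq> b"
  shows "(cmod (u a))^2 + (cmod (u b))^2 \<le> (\<Sum>n. (cmod (u n))^2)"
proof -
  have su: "summable (\<lambda>n. (cmod (u n))^2)" using assms unfolding l2_def by auto
  have "(\<Sum>n\<in>{a,b}. (cmod (u n))^2) \<le> (\<Sum>n. (cmod (u n))^2)"
    by (rule sum_le_suminf[OF su]) auto
  thus ?thesis using assms by simp
qed

lemma l2_inner_ev_r: "l2_inner f (ev k v) = f k * cnj v"
proof -
  have "(\<lambda>n. f n * cnj (ev k v n)) = (\<lambda>n. if n = k then f k * cnj v else 0)"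
    unfolding ev_def by auto
  moreover have "(\<lambda>n. if n = k then f k * cnj v else 0) sums (f k * cnj v)"
    using sums_single[of k "\<lambda>_. f k * cnj v"] by simp
  ultimately show ?thesis unfolding l2_inner_def by (simp add: sums_iff)
qed

lemma l2_inner_ev_l: "l2_inner (ev k v) g = v * cnj (g k)"
proof -
  have "(\<lambda>n. ev k v n * cnj (g n)) = (\<lambda>n. if n = k then v * cnj (g k) else 0)"
    unfolding ev_def by auto
  moreover have "(\<lambda>n. if n = k then v * cnj (g k) else 0) sums (v * cnj (g k))"
    using sums_single[of k "\<lambda>_. v * cnj (g k)"] by simp
  ultimately show ?thesis unfolding l2_inner_def by (simp add: sums_iff)
qed

lemma l2_inner_scale_l: "f \<in> l2 \<Longrightarrow> g \<in> l2 \<Longrightarrow> l2_inner (\<lambda>n. c * f n) g = c * l2_inner f g"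
  unfolding l2_inner_def by (simp add: mult.assoc suminf_mult inner_summable)

lemma l2_inner_scale_r: "f \<in> l2 \<Longrightarrow> g \<in> l2 \<Longrightarrow> l2_inner f (\<lambda>n. c * g n) = cnj c * l2_inner f g"
proof -
  assume "f \<in> l2" "g \<in> l2"
  have "(\<lambda>n. f n * cnj (c * g n)) = (\<lambda>n. cnj c * (f n * cnj (g n)))" by (auto simp: mult_ac)
  thus ?thesis unfolding l2_inner_def using \<open>f \<in> l2\<close> \<open>g \<in> l2\<close> by (simp add: suminf_mult inner_summable)
qed

lemma l2_inner_self: assumes "u \<in> l2"
  shows "l2_inner u u = complex_of_real (\<Sum>n. (cmod (u n))^2)"
proof -
  have su: "summable (\<lambda>n. (cmod (u n))^2)" using assms unfolding l2_def by auto
  have e: "(\<lambda>n. u n * cnj (u n)) = (\<lambda>n. complex_of_real ((cmod (u n))^2))"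
    by (simp only: complex_norm_square)
  show ?thesis unfolding l2_inner_def e by (rule suminf_of_real[OF su, symmetric])
qed


definition sop :: "(nat \<times> nat) set \<Rightarrow> (nat \<times> nat \<Rightarrow> complex) \<Rightarrow> op" where
  "sop F c = (\<lambda>f n. \<Sum>p\<in>F. c p * mat_unit (fst p) (snd p) f n)"

lemma bo_l2: "bounded_op T \<Longrightarrow> f \<in> l2 \<Longrightarrow> T f \<in> l2"
  unfolding bounded_op_def by blast
lemma bo_add: "bounded_op T \<Longrightarrow> f \<in> l2 \<Longrightarrow> g \<in> l2 \<Longrightarrow> T (\<lambda>n. f n + g n) = (\<lambda>n. T f n + T g n)"
  unfolding bounded_op_def by blast
lemma bo_scale: "bounded_op T \<Longrightarrow> f \<in> l2 \<Longrightarrow> T (\<lambda>n. c * f n) = (\<lambda>n. c * T f n)"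
  unfolding bounded_op_def by blast
lemma bo_bound: "bounded_op T \<Longrightarrow> \<exists>C. \<forall>f\<in>l2. l2_norm (T f) \<le> C * l2_norm f"
  unfolding bounded_op_def by blast
lemma bo_non: "bounded_op T \<Longrightarrow> f \<notin> l2 \<Longrightarrow> T f = (\<lambda>_. 0)"
  unfolding bounded_op_def by blast

lemma mat_unit_l2: "f \<in> l2 \<Longrightarrow> mat_unit i j f = ev i (f j)"
  unfolding mat_unit_def ev_def by auto

lemma bounded_mat_unit: "bounded_op (mat_unit i j)"
  unfolding bounded_op_def
proof (intro conjI ballI allI impI)
  fix f assume f: "f \<in> l2"
  show "mat_unit i j f \<in> l2" using f ev_l2 by (simp add: mat_unit_l2)
next
  fix f g assume f: "f \<in> l2" and g: "g \<in> l2"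
  have "(\<lambda>n. f n + g n) \<in> l2" using l2_add[OF f g] by simp
  thus "mat_unit i j (\<lambda>n. f n + g n) = (\<lambda>n. mat_unit i j f n + mat_unit i j g n)"
    using f g by (auto simp: mat_unit_l2 ev_def)
next
  fix c f assume f: "f \<in> l2"
  have "(\<lambda>n. c * f n) \<in> l2" using l2_scale[OF f] by simp
  thus "mat_unit i j (\<lambda>n. c * f n) = (\<lambda>n. c * mat_unit i j f n)"
    using f by (auto simp: mat_unit_l2 ev_def)
next
  show "\<exists>C. \<forall>f\<in>l2. l2_norm (mat_unit i j f) \<le> C * l2_norm f"
    by (rule exI[of _ 1]) (auto simp: mat_unit_l2 ev_l2 l2_coord)
next
  fix f :: "nat \<Rightarrow> complex" assume "f \<notin> l2"
  thus "mat_unit i j f = (\<lambda>_. 0)" unfolding mat_unit_def by simp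
qed

lemma bounded_zero: "bounded_op (\<lambda>f n. 0)"
  unfolding bounded_op_def using zero_l2 by (auto intro: exI[of _ 0])

lemma bounded_comb:
  assumes K: "bounded_op K" and G: "bounded_op G"
  shows "bounded_op (\<lambda>f n. c * K f n + G f n)"
  unfolding bounded_op_def
proof (intro conjI ballI allI impI)
  fix f assume f: "f \<in> l2"
  show "(\<lambda>n. c * K f n + G f n) \<in> l2"
    using l2_add[OF conjunct1[OF l2_scale[OF bo_l2[OF K f]]] bo_l2[OF G f]] by simp
next
  fix f g assume f: "f \<in> l2" and g: "g \<in> l2"
  show "(\<lambda>n. c * K (\<lambda>n. f n + g n) n + G (\<lambda>n. f n + g n) n) = (\<lambda>n. (c * K f n + G f n) + (c * K g n + G g n))"
    using f g by (simp add: bo_add[OF K] bo_add[OF G] algebra_simps)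
next
  fix a f assume f: "f \<in> l2"
  show "(\<lambda>n. c * K (\<lambda>n. a * f n) n + G (\<lambda>n. a * f n) n) = (\<lambda>n. a * (c * K f n + G f n))"
    using f by (simp add: bo_scale[OF K] bo_scale[OF G] algebra_simps)
next
  obtain C1 where C1: "\<forall>f\<in>l2. l2_norm (K f) \<le> C1 * l2_norm f" using bo_bound[OF K] by blast
  obtain C2 where C2: "\<forall>f\<in>l2. l2_norm (G f) \<le> C2 * l2_norm f" using bo_bound[OF G] by blast
  show "\<exists>C. \<forall>f\<in>l2. l2_norm (\<lambda>n. c * K f n + G f n) \<le> C * l2_norm f"
  proof (rule exI[of _ "2 * (cmod c * C1 + C2)"], intro ballI)
    fix f assume f: "f \<in> l2"
    have "l2_norm (\<lambda>n. c * K f n + G f n) \<le> 2 * (l2_norm (\<lambda>n. c * K f n) + l2_norm (G f))"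
      using l2_add[OF conjunct1[OF l2_scale[OF bo_l2[OF K f]]] bo_l2[OF G f]] by simp
    also have "\<dots> = 2 * (cmod c * l2_norm (K f) + l2_norm (G f))"
      using l2_scale[OF bo_l2[OF K f]] by simp
    also have "\<dots> \<le> 2 * (cmod c * (C1 * l2_norm f) + C2 * l2_norm f)"
      using C1 C2 f by (intro mult_left_mono add_mono) auto
    also have "\<dots> = 2 * (cmod c * C1 + C2) * l2_norm f" by (simp add: algebra_simps)
    finally show "l2_norm (\<lambda>n. c * K f n + G f n) \<le> 2 * (cmod c * C1 + C2) * l2_norm f" .
  qed
next
  fix f :: "nat \<Rightarrow> complex" assume "f \<notin> l2"
  thus "(\<lambda>n. c * K f n + G f n) = (\<lambda>_. 0)" using bo_non[OF K] bo_non[OF G] by simp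
qed

lemma sop_empty: "sop {} c = (\<lambda>f n. 0)" unfolding sop_def by simp

lemma sop_insert: "finite F \<Longrightarrow> x \<notin> F \<Longrightarrow>
  sop (insert x F) c = (\<lambda>f n. c x * mat_unit (fst x) (snd x) f n + sop F c f n)"
  unfolding sop_def by simp

lemma bounded_sop: "finite F \<Longrightarrow> bounded_op (sop F c)"
proof (induction F rule: finite_induct)
  case empty thus ?case by (simp add: sop_empty bounded_zero)
next
  case (insert x F)
  thus ?case by (simp add: sop_insert bounded_comb bounded_mat_unit)
qed

lemma op_norm_le:
  assumes T: "bounded_op T" and f: "f \<in> l2" "l2_norm f \<le> 1"
  shows "l2_norm (T f) \<le> op_norm T"
proof -
  obtain C where C: "\<forall>f\<in>l2. l2_norm (T f) \<le> C * l2_norm f" using bo_bound[OF T] by blast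
  have "bdd_above {l2_norm (T f) | f. f \<in> l2 \<and> l2_norm f \<le> 1}"
  proof (rule bdd_aboveI[of _ "\<bar>C\<bar>"])
    fix x assume "x \<in> {l2_norm (T f) | f. f \<in> l2 \<and> l2_norm f \<le> 1}"
    then obtain g where g: "g \<in> l2" "l2_norm g \<le> 1" "x = l2_norm (T g)" by blast
    have "x \<le> C * l2_norm g" using C g by auto
    also have "\<dots> \<le> \<bar>C\<bar> * l2_norm g" using l2_norm_nonneg[OF g(1)] by (intro mult_right_mono) auto
    also have "\<dots> \<le> \<bar>C\<bar>" using g l2_norm_nonneg[OF g(1)] by (simp add: mult_left_le)
    finally show "x \<le> \<bar>C\<bar>" .
  qed
  thus ?thesis unfolding op_norm_def using f by (intro cSup_upper) auto
qed

lemma op_norm_zero: "op_norm (\<lambda>f n. 0) = 0"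
proof -
  have "{l2_norm ((\<lambda>f n. 0::complex) f) | f. f \<in> l2 \<and> l2_norm f \<le> 1} = {0}"
    using zero_l2 by auto
  thus ?thesis unfolding op_norm_def by simp
qed

lemma op_norm_neg: "op_norm (\<lambda>f n. - D f n) = op_norm D"
proof -
  have "l2_norm (\<lambda>n. - D f n) = l2_norm (D f)" for f unfolding l2_norm_def by simp
  thus ?thesis unfolding op_norm_def by simp
qed

lemma sop_in_K0: assumes "T \<in> K0_span" shows "T \<in> K0"
proof -
  obtain F c where F: "finite F" "T = sop F c" using assms unfolding K0_span_def sop_def by blast
  show ?thesis unfolding K0_def mem_Collect_eq
  proof (intro conjI allI impI)
    show "bounded_op T" using F bounded_sop by simp
    fix e :: real assume "e > 0"
    thus "\<exists>S\<in>K0_span. op_norm (\<lambda>f n. T f n - S f n) < e"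
      by (intro bexI[OF _ assms]) (simp add: op_norm_zero)
  qed
qed

lemma sop_comb:
  assumes "finite F1" "finite F2"
  shows "(\<lambda>f n. (-1) * sop F1 c1 f n + sop F2 c2 f n) =
     sop (F1 \<union> F2) (\<lambda>p. - (if p \<in> F1 then c1 p else 0) + (if p \<in> F2 then c2 p else 0))"
proof (intro ext)
  fix f n
  let ?M = "\<lambda>p. mat_unit (fst p) (snd p) f n"
  have a: "(\<Sum>p\<in>F1 \<union> F2. (if p \<in> F1 then c1 p else 0) * ?M p) = (\<Sum>p\<in>F1. c1 p * ?M p)"
  proof -
    have "(\<Sum>p\<in>F1 \<union> F2. (if p \<in> F1 then c1 p else 0) * ?M p) = (\<Sum>p\<in>F1 \<union> F2. if p \<in> F1 then c1 p * ?M p else 0)"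
      by (intro sum.cong) auto
    also have "\<dots> = (\<Sum>p\<in>(F1 \<union> F2) \<inter> F1. c1 p * ?M p)"
      by (rule sum.inter_restrict[symmetric]) (use assms in simp)
    also have "(F1 \<union> F2) \<inter> F1 = F1" by auto
    finally show ?thesis .
  qed
  have b: "(\<Sum>p\<in>F1 \<union> F2. (if p \<in> F2 then c2 p else 0) * ?M p) = (\<Sum>p\<in>F2. c2 p * ?M p)"
  proof -
    have "(\<Sum>p\<in>F1 \<union> F2. (if p \<in> F2 then c2 p else 0) * ?M p) = (\<Sum>p\<in>F1 \<union> F2. if p \<in> F2 then c2 p * ?M p else 0)"
      by (intro sum.cong) auto
    also have "\<dots> = (\<Sum>p\<in>(F1 \<union> F2) \<inter> F2. c2 p * ?M p)"
      by (rule sum.inter_restrict[symmetric]) (use assms in simp)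
    also have "(F1 \<union> F2) \<inter> F2 = F2" by auto
    finally show ?thesis .
  qed
  have "sop (F1 \<union> F2) (\<lambda>p. - (if p \<in> F1 then c1 p else 0) + (if p \<in> F2 then c2 p else 0)) f n
     = - (\<Sum>p\<in>F1 \<union> F2. (if p \<in> F1 then c1 p else 0) * ?M p) + (\<Sum>p\<in>F1 \<union> F2. (if p \<in> F2 then c2 p else 0) * ?M p)"
    unfolding sop_def by (simp only: distrib_right sum.distrib mult_minus_left sum_negf)
  also have "\<dots> = (-1) * sop F1 c1 f n + sop F2 c2 f n" unfolding a b sop_def by simp
  finally show "(-1) * sop F1 c1 f n + sop F2 c2 f n = sop (F1 \<union> F2) (\<lambda>p. - (if p \<in> F1 then c1 p else 0) + (if p \<in> F2 then c2 p else 0)) f n"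
    by simp
qed

lemma sop_K0_span: "finite F \<Longrightarrow> (0,0) \<notin> F \<Longrightarrow> sop F c \<in> K0_span"
  unfolding K0_span_def sop_def by blast

lemma K0_comb:
  assumes K: "K \<in> K0" and G: "G \<in> K0_span"
  shows "(\<lambda>f n. (-1) * K f n + G f n) \<in> K0"
proof -
  obtain F2 c2 where F2: "finite F2" "(0,0) \<notin> F2" "G = sop F2 c2"
    using G unfolding K0_span_def sop_def by blast
  have bK: "bounded_op K" using K unfolding K0_def by simp
  have bT: "bounded_op (\<lambda>f n. (-1) * K f n + G f n)"
    unfolding F2(3) by (rule bounded_comb[where c="-1", OF bK bounded_sop[OF F2(1)]])
  have "\<exists>S\<in>K0_span. op_norm (\<lambda>f n. ((-1) * K f n + G f n) - S f n) < e" if e: "e > 0" for e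
  proof -
    obtain S where S: "S \<in> K0_span" "op_norm (\<lambda>f n. K f n - S f n) < e" using K e unfolding K0_def by blast
    obtain F1 c1 where F1: "finite F1" "(0,0) \<notin> F1" "S = sop F1 c1"
      using S(1) unfolding K0_span_def sop_def by blast
    define S' where "S' = (\<lambda>f n. (-1) * S f n + G f n)"
    have S': "S' \<in> K0_span" unfolding S'_def F1(3) F2(3) sop_comb[OF F1(1) F2(1)]
      by (rule sop_K0_span) (use F1 F2 in auto)
    have eq: "(\<lambda>f n. ((-1) * K f n + G f n) - S' f n) = (\<lambda>f n. - (K f n - S f n))"
      unfolding S'_def by (intro ext) (simp add: algebra_simps)
    show ?thesis
    proof (rule bexI[OF _ S'])
      show "op_norm (\<lambda>f n. ((-1) * K f n + G f n) - S' f n) < e"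
        unfolding eq op_norm_neg by (rule S(2))
    qed
  qed
  thus ?thesis unfolding K0_def using bT by blast
qed

lemma sop_diag: assumes "(j,j) \<notin> F" shows "sop F c (ev j 1) j = 0"
proof -
  have "ev j 1 \<in> l2" using ev_l2 by simp
  hence "sop F c (ev j 1) j = (\<Sum>p\<in>F. c p * ev (fst p) (ev j 1 (snd p)) j)"
    unfolding sop_def by (simp add: mat_unit_l2)
  also have "\<dots> = 0" using assms by (intro sum.neutral) (auto simp: ev_def)
  finally show ?thesis .
qed

lemma diag_approx:
  assumes K: "bounded_op K" and F: "finite F" "(j,j) \<notin> F"
    and le: "op_norm (\<lambda>f n. K f n - sop F c f n) < e"
  shows "cmod (K (ev j 1) j) < e"
proof -
  have eq: "(\<lambda>f n. K f n - sop F c f n) = (\<lambda>f n. (-1) * sop F c f n + K f n)" by (simp add: algebra_simps)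
  have bD: "bounded_op (\<lambda>f n. K f n - sop F c f n)" unfolding eq by (rule bounded_comb[OF bounded_sop[OF F(1)] K])
  have ev: "ev j 1 \<in> l2" "l2_norm (ev j 1) \<le> 1" using ev_l2 by auto
  have "cmod (K (ev j 1) j) = cmod ((\<lambda>n. K (ev j 1) n - sop F c (ev j 1) n) j)" using sop_diag[OF F(2)] by simp
  also have "\<dots> \<le> l2_norm (\<lambda>n. K (ev j 1) n - sop F c (ev j 1) n)"
    by (rule l2_coord) (use bo_l2[OF bD ev(1)] in simp)
  also have "\<dots> \<le> op_norm (\<lambda>f n. K f n - sop F c f n)" using op_norm_le[OF bD ev] by simp
  finally show ?thesis using le by simp
qed

lemma S0I: "K \<in> K0 \<Longrightarrow> (\<lambda>f n. c * id_op f n + K f n) \<in> S0"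
  unfolding S0_def by blast

lemma S0_l2: assumes "T \<in> S0" "f \<in> l2" shows "T f \<in> l2"
proof -
  obtain c K where K: "K \<in> K0" "T = (\<lambda>f n. c * id_op f n + K f n)" using assms unfolding S0_def by blast
  have "bounded_op K" using K unfolding K0_def by simp
  hence "(\<lambda>n. c * f n + K f n) \<in> l2" using l2_add[OF conjunct1[OF l2_scale[OF assms(2)]] bo_l2[of K f]] assms by simp
  thus ?thesis using K assms by (simp add: id_op_def)
qed

lemma S0_scale: assumes "T \<in> S0" "f \<in> l2" shows "T (\<lambda>n. a * f n) = (\<lambda>n. a * T f n)"
proof -
  obtain c K where K: "K \<in> K0" "T = (\<lambda>f n. c * id_op f n + K f n)" using assms unfolding S0_def by blast
  have bK: "bounded_op K" using K unfolding K0_def by simp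
  have "(\<lambda>n. a * f n) \<in> l2" using l2_scale[OF assms(2)] by simp
  thus ?thesis using K assms bo_scale[OF bK assms(2)] by (simp add: id_op_def algebra_simps)
qed


locale cst =
  fixes A :: "'a cstar_alg"
  assumes U: "unital_cstar_algebra A"
begin

abbreviation "C \<equiv> carr A"

lemmas UU = U[unfolded unital_cstar_algebra_def]

lemma c_zero[simp]: "zero A \<in> C" and c_one[simp]: "one A \<in> C"
  and c_add[simp]: "x \<in> C \<Longrightarrow> y \<in> C \<Longrightarrow> add A x y \<in> C"
  and c_mul[simp]: "x \<in> C \<Longrightarrow> y \<in> C \<Longrightarrow> mul A x y \<in> C"
  and c_scale[simp]: "x \<in> C \<Longrightarrow> scale A c x \<in> C"
  and c_star[simp]: "x \<in> C \<Longrightarrow> star A x \<in> C"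
  using UU[THEN conjunct1] UU[THEN conjunct2, THEN conjunct1] UU[THEN conjunct2, THEN conjunct2, THEN conjunct1] UU[THEN conjunct2, THEN conjunct2, THEN conjunct2, THEN conjunct1] UU[THEN conjunct2, THEN conjunct2, THEN conjunct2, THEN conjunct2, THEN conjunct1] by blast+

lemma add_assoc[simp]: "x \<in> C \<Longrightarrow> y \<in> C \<Longrightarrow> z \<in> C \<Longrightarrow> add A (add A x y) z = add A x (add A y z)"
  using UU[THEN conjunct2, THEN conjunct2, THEN conjunct2, THEN conjunct2, THEN conjunct2, THEN conjunct1] by blast
lemma add_comm: "x \<in> C \<Longrightarrow> y \<in> C \<Longrightarrow> add A x y = add A y x"
  using UU[THEN conjunct2, THEN conjunct2, THEN conjunct2, THEN conjunct2, THEN conjunct2, THEN conjunct2, THEN conjunct1] by blast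
lemma add_zero_r[simp]: "x \<in> C \<Longrightarrow> add A x (zero A) = x"
  using UU[THEN conjunct2, THEN conjunct2, THEN conjunct2, THEN conjunct2, THEN conjunct2, THEN conjunct2, THEN conjunct2, THEN conjunct1] by blast
lemma add_neg: "x \<in> C \<Longrightarrow> add A x (scale A (-1) x) = zero A"
  using UU[THEN conjunct2, THEN conjunct2, THEN conjunct2, THEN conjunct2, THEN conjunct2, THEN conjunct2, THEN conjunct2, THEN conjunct2, THEN conjunct1] by blast
lemma scale_one[simp]: "x \<in> C \<Longrightarrow> scale A 1 x = x"
  using UU[THEN conjunct2, THEN conjunct2, THEN conjunct2, THEN conjunct2, THEN conjunct2, THEN conjunct2, THEN conjunct2, THEN conjunct2, THEN conjunct2, THEN conjunct1] by blast
lemma scale_scale[simp]: "x \<in> C \<Longrightarrow> scale A a (scale A b x) = scale A (a * b) x"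
  using UU[THEN conjunct2, THEN conjunct2, THEN conjunct2, THEN conjunct2, THEN conjunct2, THEN conjunct2, THEN conjunct2, THEN conjunct2, THEN conjunct2, THEN conjunct2, THEN conjunct1] by blast
lemma scale_add_l: "x \<in> C \<Longrightarrow> scale A (a + b) x = add A (scale A a x) (scale A b x)"
  using UU[THEN conjunct2, THEN conjunct2, THEN conjunct2, THEN conjunct2, THEN conjunct2, THEN conjunct2, THEN conjunct2, THEN conjunct2, THEN conjunct2, THEN conjunct2, THEN conjunct2, THEN conjunct1] by blast
lemma scale_add_r[simp]: "x \<in> C \<Longrightarrow> y \<in> C \<Longrightarrow> scale A a (add A x y) = add A (scale A a x) (scale A a y)"
  using UU[THEN conjunct2, THEN conjunct2, THEN conjunct2, THEN conjunct2, THEN conjunct2, THEN conjunct2, THEN conjunct2, THEN conjunct2, THEN conjunct2, THEN conjunct2, THEN conjunct2, THEN conjunct2, THEN conjunct1] by blast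
lemma mul_assoc[simp]: "x \<in> C \<Longrightarrow> y \<in> C \<Longrightarrow> z \<in> C \<Longrightarrow> mul A (mul A x y) z = mul A x (mul A y z)"
  using UU[THEN conjunct2, THEN conjunct2, THEN conjunct2, THEN conjunct2, THEN conjunct2, THEN conjunct2, THEN conjunct2, THEN conjunct2, THEN conjunct2, THEN conjunct2, THEN conjunct2, THEN conjunct2, THEN conjunct2, THEN conjunct1] by blast
lemma distl[simp]: "x \<in> C \<Longrightarrow> y \<in> C \<Longrightarrow> z \<in> C \<Longrightarrow> mul A x (add A y z) = add A (mul A x y) (mul A x z)"
  using UU[THEN conjunct2, THEN conjunct2, THEN conjunct2, THEN conjunct2, THEN conjunct2, THEN conjunct2, THEN conjunct2, THEN conjunct2, THEN conjunct2, THEN conjunct2, THEN conjunct2, THEN conjunct2, THEN conjunct2, THEN conjunct2, THEN conjunct1] by blast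
lemma distr[simp]: "x \<in> C \<Longrightarrow> y \<in> C \<Longrightarrow> z \<in> C \<Longrightarrow> mul A (add A x y) z = add A (mul A x z) (mul A y z)"
  using UU[THEN conjunct2, THEN conjunct2, THEN conjunct2, THEN conjunct2, THEN conjunct2, THEN conjunct2, THEN conjunct2, THEN conjunct2, THEN conjunct2, THEN conjunct2, THEN conjunct2, THEN conjunct2, THEN conjunct2, THEN conjunct2, THEN conjunct1] by blast
lemma mul_scale_l[simp]: "x \<in> C \<Longrightarrow> y \<in> C \<Longrightarrow> mul A (scale A a x) y = scale A a (mul A x y)"
  using UU[THEN conjunct2, THEN conjunct2, THEN conjunct2, THEN conjunct2, THEN conjunct2, THEN conjunct2, THEN conjunct2, THEN conjunct2, THEN conjunct2, THEN conjunct2, THEN conjunct2, THEN conjunct2, THEN conjunct2, THEN conjunct2, THEN conjunct2, THEN conjunct1] by blast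
lemma mul_scale_r[simp]: "x \<in> C \<Longrightarrow> y \<in> C \<Longrightarrow> mul A x (scale A a y) = scale A a (mul A x y)"
  using UU[THEN conjunct2, THEN conjunct2, THEN conjunct2, THEN conjunct2, THEN conjunct2, THEN conjunct2, THEN conjunct2, THEN conjunct2, THEN conjunct2, THEN conjunct2, THEN conjunct2, THEN conjunct2, THEN conjunct2, THEN conjunct2, THEN conjunct2, THEN conjunct1] by blast
lemma mul_one_l[simp]: "x \<in> C \<Longrightarrow> mul A (one A) x = x"
  using UU[THEN conjunct2, THEN conjunct2, THEN conjunct2, THEN conjunct2, THEN conjunct2, THEN conjunct2, THEN conjunct2, THEN conjunct2, THEN conjunct2, THEN conjunct2, THEN conjunct2, THEN conjunct2, THEN conjunct2, THEN conjunct2, THEN conjunct2, THEN conjunct2, THEN conjunct1] by blast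
lemma mul_one_r[simp]: "x \<in> C \<Longrightarrow> mul A x (one A) = x"
  using UU[THEN conjunct2, THEN conjunct2, THEN conjunct2, THEN conjunct2, THEN conjunct2, THEN conjunct2, THEN conjunct2, THEN conjunct2, THEN conjunct2, THEN conjunct2, THEN conjunct2, THEN conjunct2, THEN conjunct2, THEN conjunct2, THEN conjunct2, THEN conjunct2, THEN conjunct1] by blast
lemma star_star[simp]: "x \<in> C \<Longrightarrow> star A (star A x) = x"
  using UU[THEN conjunct2, THEN conjunct2, THEN conjunct2, THEN conjunct2, THEN conjunct2, THEN conjunct2, THEN conjunct2, THEN conjunct2, THEN conjunct2, THEN conjunct2, THEN conjunct2, THEN conjunct2, THEN conjunct2, THEN conjunct2, THEN conjunct2, THEN conjunct2, THEN conjunct2, THEN conjunct2, THEN conjunct2, THEN conjunct2, THEN conjunct2, THEN conjunct2, THEN conjunct1] by blast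
lemma star_add[simp]: "x \<in> C \<Longrightarrow> y \<in> C \<Longrightarrow> star A (add A x y) = add A (star A x) (star A y)"
  using UU[THEN conjunct2, THEN conjunct2, THEN conjunct2, THEN conjunct2, THEN conjunct2, THEN conjunct2, THEN conjunct2, THEN conjunct2, THEN conjunct2, THEN conjunct2, THEN conjunct2, THEN conjunct2, THEN conjunct2, THEN conjunct2, THEN conjunct2, THEN conjunct2, THEN conjunct2, THEN conjunct2, THEN conjunct2, THEN conjunct2, THEN conjunct2, THEN conjunct2, THEN conjunct2, THEN conjunct1] by blast
lemma star_scale[simp]: "x \<in> C \<Longrightarrow> star A (scale A a x) = scale A (cnj a) (star A x)"
  using UU[THEN conjunct2, THEN conjunct2, THEN conjunct2, THEN conjunct2, THEN conjunct2, THEN conjunct2, THEN conjunct2, THEN conjunct2, THEN conjunct2, THEN conjunct2, THEN conjunct2, THEN conjunct2, THEN conjunct2, THEN conjunct2, THEN conjunct2, THEN conjunct2, THEN conjunct2, THEN conjunct2, THEN conjunct2, THEN conjunct2, THEN conjunct2, THEN conjunct2, THEN conjunct2, THEN conjunct2, THEN conjunct1] by blast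
lemma star_mul[simp]: "x \<in> C \<Longrightarrow> y \<in> C \<Longrightarrow> star A (mul A x y) = mul A (star A y) (star A x)"
  using UU[THEN conjunct2, THEN conjunct2, THEN conjunct2, THEN conjunct2, THEN conjunct2, THEN conjunct2, THEN conjunct2, THEN conjunct2, THEN conjunct2, THEN conjunct2, THEN conjunct2, THEN conjunct2, THEN conjunct2, THEN conjunct2, THEN conjunct2, THEN conjunct2, THEN conjunct2, THEN conjunct2, THEN conjunct2, THEN conjunct2, THEN conjunct2, THEN conjunct2, THEN conjunct2, THEN conjunct2, THEN conjunct2, THEN conjunct1] by blast

lemma add_left_comm: "x \<in> C \<Longrightarrow> y \<in> C \<Longrightarrow> z \<in> C \<Longrightarrow> add A x (add A y z) = add A y (add A x z)"
  by (metis add_assoc add_comm)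

lemma add_zero_l[simp]: "x \<in> C \<Longrightarrow> add A (zero A) x = x"
  by (metis add_comm add_zero_r c_zero)

lemma idem_zero: assumes "y \<in> C" "add A y y = y" shows "y = zero A"
proof -
  have "zero A = add A y (scale A (-1) y)" using add_neg assms by simp
  also have "\<dots> = add A (add A y y) (scale A (-1) y)" using assms by simp
  also have "\<dots> = add A y (add A y (scale A (-1) y))" using assms(1) by (rule add_assoc) (use assms in simp_all)
  also have "\<dots> = y" using assms by (simp only: add_neg add_zero_r)
  finally show ?thesis by simp
qed

lemma scale_zero_c[simp]: "x \<in> C \<Longrightarrow> scale A 0 x = zero A"
  by (rule idem_zero) (simp_all add: scale_add_l[of x 0 0, symmetric])

lemma star_one[simp]: "star A (one A) = one A"
proof -
  have "star A (star A (one A)) = star A (mul A (one A) (star A (one A)))" by simp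
  also have "\<dots> = mul A (star A (star A (one A))) (star A (one A))" by (simp only: star_mul c_one c_star)
  also have "\<dots> = star A (one A)" by simp
  finally show ?thesis by simp
qed

lemma star_zero[simp]: "star A (zero A) = zero A"
proof -
  have "star A (zero A) = star A (scale A 0 (zero A))" by simp
  also have "\<dots> = zero A" by (simp del: scale_zero_c) (simp)
  finally show ?thesis .
qed

lemma mul_zero_l[simp]: "x \<in> C \<Longrightarrow> mul A (zero A) x = zero A"
  by (metis c_zero mul_scale_l scale_zero_c c_mul)
lemma mul_zero_r[simp]: "x \<in> C \<Longrightarrow> mul A x (zero A) = zero A"
  by (metis c_zero mul_scale_r scale_zero_c c_mul)

lemma add_neg_cancel: "x \<in> C \<Longrightarrow> y \<in> C \<Longrightarrow> add A (scale A (-1) y) (add A y x) = x"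
  by (metis add_assoc add_comm add_neg add_zero_l c_scale)

lemmas ac = add_comm add_left_comm

lemma expand_w:
  assumes "y0 \<in> C" "y1 \<in> C" "a \<in> C"
  shows "mul A (star A (add A y1 (scale A (-1) (mul A y0 a)))) (add A y1 (scale A (-1) (mul A y0 a)))
   = add A (add A (add A (mul A (star A y1) y1) (scale A (-1) (mul A (star A y1) (mul A y0 a))))
       (scale A (-1) (mul A (star A a) (mul A (star A y0) y1)))) (mul A (star A a) (mul A (star A y0) (mul A y0 a)))"
  using assms by (simp add: ac)

lemma neg_twice: assumes "g \<in> C" "x \<in> C"
  shows "add A (add A (add A g (scale A (-1) x)) (scale A (-1) x)) x = add A (scale A (-1) x) g"
proof -
  have "add A (add A (add A g (scale A (-1) x)) (scale A (-1) x)) x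
     = add A (add A g (scale A (-1) x)) (add A (scale A (-1) x) x)" using assms by simp
  also have "add A (scale A (-1) x) x = zero A" using assms add_neg add_comm by (metis c_scale)
  finally show ?thesis using assms by (simp add: add_comm)
qed

lemma schur:
  assumes c: "y00 \<in> C" "y01 \<in> C" "y10 \<in> C" "y11 \<in> C"
  and hA: "a = add A (add A (zero A) (mul A (star A y00) y01)) (mul A (star A y10) y11)"
  and h1: "one A = add A (add A (zero A) (mul A (star A y00) y00)) (mul A (star A y10) y10)"
  and hg: "g = add A (add A (zero A) (mul A (star A y01) y01)) (mul A (star A y11) y11)"
  shows "add A (scale A (-1) (mul A (star A a) a)) g =
    add A (add A (zero A) (mul A (star A (add A y01 (scale A (-1) (mul A y00 a)))) (add A y01 (scale A (-1) (mul A y00 a)))))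
      (mul A (star A (add A y11 (scale A (-1) (mul A y10 a)))) (add A y11 (scale A (-1) (mul A y10 a))))"
proof -
  have ca: "a \<in> C" using hA c by simp
  have cg: "g \<in> C" using hg c by simp
  have g': "g = add A (mul A (star A y01) y01) (mul A (star A y11) y11)" using hg c by simp
  have e1: "add A (mul A (star A y01) (mul A y00 a)) (mul A (star A y11) (mul A y10 a)) = mul A (star A a) a"
  proof -
    have "star A a = add A (mul A (star A y01) y00) (mul A (star A y11) y10)" using hA c by simp
    hence "mul A (star A a) a = mul A (add A (mul A (star A y01) y00) (mul A (star A y11) y10)) a" by simp
    thus ?thesis using c ca by simp
  qed
  have e2: "add A (mul A (star A a) (mul A (star A y00) y01)) (mul A (star A a) (mul A (star A y10) y11)) = mul A (star A a) a"
  proof -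
    have "mul A (star A a) a = mul A (star A a) (add A (mul A (star A y00) y01) (mul A (star A y10) y11))"
      using hA c by simp
    thus ?thesis using c ca by simp
  qed
  have e3: "add A (mul A (star A a) (mul A (star A y00) (mul A y00 a))) (mul A (star A a) (mul A (star A y10) (mul A y10 a))) = mul A (star A a) a"
  proof -
    have "mul A (star A a) a = mul A (star A a) (mul A (one A) a)" using ca by simp
    also have "\<dots> = mul A (star A a) (mul A (add A (mul A (star A y00) y00) (mul A (star A y10) y10)) a)"
      using h1 c by simp
    finally show ?thesis using c ca by simp
  qed
  have "add A (add A (zero A) (mul A (star A (add A y01 (scale A (-1) (mul A y00 a)))) (add A y01 (scale A (-1) (mul A y00 a)))))
      (mul A (star A (add A y11 (scale A (-1) (mul A y10 a)))) (add A y11 (scale A (-1) (mul A y10 a))))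
    = add A (add A (add A (add A (mul A (star A y01) y01) (mul A (star A y11) y11))
         (scale A (-1) (add A (mul A (star A y01) (mul A y00 a)) (mul A (star A y11) (mul A y10 a)))))
         (scale A (-1) (add A (mul A (star A a) (mul A (star A y00) y01)) (mul A (star A a) (mul A (star A y10) y11)))))
         (add A (mul A (star A a) (mul A (star A y00) (mul A y00 a))) (mul A (star A a) (mul A (star A y10) (mul A y10 a))))"
    using c ca by (simp only: expand_w c_zero add_zero_l c_add c_mul c_scale c_star) (simp add: ac)
  also have "\<dots> = add A (add A (add A g (scale A (-1) (mul A (star A a) a))) (scale A (-1) (mul A (star A a) a))) (mul A (star A a) a)"
    by (simp only: e1 e2 e3 g')
  also have "\<dots> = add A (scale A (-1) (mul A (star A a) a)) g" using ca cg by (simp only: neg_twice c_mul c_star)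
  finally show ?thesis by simp
qed

end


definition mat2 :: "'b \<Rightarrow> 'b \<Rightarrow> 'b \<Rightarrow> 'b \<Rightarrow> nat \<Rightarrow> nat \<Rightarrow> 'b" where
  "mat2 p q r t = (\<lambda>i j. if i = 0 then (if j = 0 then p else q) else (if j = 0 then r else t))"

lemma mat2_simps[simp]: "mat2 p q r t 0 0 = p" "mat2 p q r t 0 1 = q" "mat2 p q r t 1 0 = r" "mat2 p q r t 1 1 = t"
  unfolding mat2_def by auto

lemma mat2_simps2[simp]: "mat2 p q r t 0 (Suc 0) = q" "mat2 p q r t (Suc 0) 0 = r" "mat2 p q r t (Suc 0) (Suc 0) = t"
  unfolding mat2_def by auto

lemma all_less_2: "(\<forall>i<(2::nat). P i) = (P 0 \<and> P 1)"
  by (auto simp: numeral_2_eq_2 less_Suc_eq)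

lemma qform:
  assumes "op_mat_pos 2 X" "x0 \<in> l2" "x1 \<in> l2"
  shows "Im (l2_inner (X 0 0 x0) x0 + l2_inner (X 0 1 x1) x0 + l2_inner (X 1 0 x0) x1 + l2_inner (X 1 1 x1) x1) = 0
    \<and> Re (l2_inner (X 0 0 x0) x0 + l2_inner (X 0 1 x1) x0 + l2_inner (X 1 0 x0) x1 + l2_inner (X 1 1 x1) x1) \<ge> 0"
proof -
  define x where "x = (\<lambda>k::nat. if k = 0 then x0 else x1)"
  have "\<forall>k<2. x k \<in> l2" using assms unfolding x_def by (simp add: all_less_2)
  hence "let s = (\<Sum>i<2. \<Sum>j<2. l2_inner (X i j (x j)) (x i)) in Im s = 0 \<and> Re s \<ge> 0"
    using assms(1) unfolding op_mat_pos_def by blast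
  thus ?thesis unfolding x_def by (simp add: numeral_2_eq_2 Let_def add.assoc)
qed

lemma qformI:
  assumes "\<And>x0 x1. x0 \<in> l2 \<Longrightarrow> x1 \<in> l2 \<Longrightarrow>
    Im (l2_inner (X 0 0 x0) x0 + l2_inner (X 0 1 x1) x0 + l2_inner (X 1 0 x0) x1 + l2_inner (X 1 1 x1) x1) = 0
    \<and> Re (l2_inner (X 0 0 x0) x0 + l2_inner (X 0 1 x1) x0 + l2_inner (X 1 0 x0) x1 + l2_inner (X 1 1 x1) x1) \<ge> 0"
  shows "op_mat_pos 2 X"
  unfolding op_mat_pos_def
proof (intro allI impI)
  fix x :: "nat \<Rightarrow> nat \<Rightarrow> complex" assume "\<forall>k<2. x k \<in> l2"
  hence "x 0 \<in> l2" "x 1 \<in> l2" by (auto simp: all_less_2)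
  from assms[OF this] show "let s = (\<Sum>i<2. \<Sum>j<2. l2_inner (X i j (x j)) (x i)) in Im s = 0 \<and> Re s \<ge> 0"
    by (simp add: numeral_2_eq_2 Let_def add.assoc)
qed

lemma asum2: "asum A f 2 = add A (add A (zero A) (f 0)) (f 1)"
  by (simp add: numeral_2_eq_2)

lemma cstar2: fixes M :: "nat \<Rightarrow> nat \<Rightarrow> 'a" shows "cstar_mat_pos A 2 M \<longleftrightarrow> (\<exists>Y::nat \<Rightarrow> nat \<Rightarrow> 'a. Y 0 0 \<in> carr A \<and> Y 0 1 \<in> carr A \<and> Y 1 0 \<in> carr A \<and> Y 1 1 \<in> carr A \<and>
   M 0 0 = add A (add A (zero A) (mul A (star A (Y 0 0)) (Y 0 0))) (mul A (star A (Y 1 0)) (Y 1 0)) \<and>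
   M 0 1 = add A (add A (zero A) (mul A (star A (Y 0 0)) (Y 0 1))) (mul A (star A (Y 1 0)) (Y 1 1)) \<and>
   M 1 0 = add A (add A (zero A) (mul A (star A (Y 0 1)) (Y 0 0))) (mul A (star A (Y 1 1)) (Y 1 0)) \<and>
   M 1 1 = add A (add A (zero A) (mul A (star A (Y 0 1)) (Y 0 1))) (mul A (star A (Y 1 1)) (Y 1 1)))"
  unfolding cstar_mat_pos_def asum2 all_less_2 by (simp only: conj_assoc)

lemma l2_inner_diff: "f \<in> l2 \<Longrightarrow> g \<in> l2 \<Longrightarrow> h \<in> l2 \<Longrightarrow>
  l2_inner (\<lambda>n. f n - g n) h = l2_inner f h - l2_inner g h"
  unfolding l2_inner_def by (simp add: suminf_diff inner_summable algebra_simps)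

lemma l2_inner_zero: "l2_inner (\<lambda>n. 0) h = 0"
  unfolding l2_inner_def by simp


lemma ev_self: "ev j v j = v" unfolding ev_def by simp

lemma id_l2: "f \<in> l2 \<Longrightarrow> id_op f = f" unfolding id_op_def by simp

lemma idS: "id_op \<in> S0"
proof -
  have "(\<lambda>f n. 1 * id_op f n + sop {} (\<lambda>_. 0) f n) \<in> S0"
    by (intro S0I sop_in_K0 sop_K0_span) auto
  moreover have "(\<lambda>f n. 1 * id_op f n + sop {} (\<lambda>_. 0) f n) = id_op" by (simp add: sop_empty)
  ultimately show ?thesis by simp
qed

lemma ZS: "(\<lambda>f n. 0) \<in> S0"
proof -
  have "(\<lambda>f n. 0 * id_op f n + sop {} (\<lambda>_. 0) f n) \<in> S0"
    by (intro S0I sop_in_K0 sop_K0_span) auto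
  moreover have "(\<lambda>f n. 0 * id_op f n + sop {} (\<lambda>_. 0) f n) = (\<lambda>f n. 0)" by (simp add: sop_empty)
  ultimately show ?thesis by simp
qed

definition "T10 = sop {(1,0)} (\<lambda>_. 1)"

lemma T10S: "T10 \<in> S0"
proof -
  have "(\<lambda>f n. 0 * id_op f n + T10 f n) \<in> S0"
    unfolding T10_def by (intro S0I sop_in_K0 sop_K0_span) auto
  thus ?thesis by simp
qed

lemma T10_app: "f \<in> l2 \<Longrightarrow> T10 f = ev 1 (f 0)"
  unfolding T10_def sop_def by (simp add: mat_unit_l2)

definition "bm m = (\<lambda>f n. 1 * id_op f n + sop {(m,m)} (\<lambda>_. -1) f n)"

lemma bmS: "m \<noteq> 0 \<Longrightarrow> bm m \<in> S0"
  unfolding bm_def by (intro S0I sop_in_K0 sop_K0_span) auto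

lemma bm_app: "f \<in> l2 \<Longrightarrow> bm m f = (\<lambda>n. f n - ev m (f m) n)"
  unfolding bm_def sop_def by (simp add: mat_unit_l2 id_l2)

lemma Sphi: "phi ` S0 = carr A \<Longrightarrow> x \<in> S0 \<Longrightarrow> phi x \<in> carr A" by blast

lemma (in cst) main_false:
  assumes ph: "ucoi_S0 phi A"
  shows False
proof -
  have surj: "phi ` S0 = C" and inj: "inj_on phi S0"
    and lin: "\<And>c S T. S \<in> S0 \<Longrightarrow> T \<in> S0 \<Longrightarrow> phi (\<lambda>f n. c * S f n + T f n) = add A (scale A c (phi S)) (phi T)"
    and one: "phi id_op = one A"
    and pos: "\<And>n X. (\<forall>i<n. \<forall>j<n. X i j \<in> S0) \<Longrightarrow> op_mat_pos n X \<longleftrightarrow> cstar_mat_pos A n (\<lambda>i j. phi (X i j))"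
    using ph unfolding ucoi_S0_def by blast+
  have pos2: "op_mat_pos 2 (mat2 p q r t) \<longleftrightarrow> cstar_mat_pos A 2 (\<lambda>i j. phi (mat2 p q r t i j))"
    if "p \<in> S0" "q \<in> S0" "r \<in> S0" "t \<in> S0" for p q r t
    by (rule pos) (use that in \<open>auto simp: all_less_2\<close>)
  define a where "a = phi T10"
  have ca: "a \<in> C" unfolding a_def using T10S surj by blast
  obtain s where s: "s \<in> S0" "phi s = star A a" using ca surj
    by (metis c_star imageE)
  obtain b0 where b0: "b0 \<in> S0" "phi b0 = mul A (star A a) a" using ca surj
    by (metis c_star c_mul imageE)
  have "cstar_mat_pos A 2 (\<lambda>i j. phi (mat2 id_op T10 s b0 i j))"
    unfolding cstar2
    by (rule exI[of _ "\<lambda>k j. if k = 0 then (if j = 0 then one A else a) else zero A"])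
       (simp add: one a_def[symmetric] s b0 ca)
  hence P1: "op_mat_pos 2 (mat2 id_op T10 s b0)" using pos2 idS T10S s b0 by blast
  \<comment> \<open>Step 2: the adjoint relation\<close>
  have Qt: "Im (l2_inner x0 x0 + t * (x1 0 * cnj (x0 1)) + cnj t * l2_inner (s x0) x1 + t * (cnj t * l2_inner (b0 x1) x1)) = 0
     \<and> Re (l2_inner x0 x0 + t * (x1 0 * cnj (x0 1)) + cnj t * l2_inner (s x0) x1 + t * (cnj t * l2_inner (b0 x1) x1)) \<ge> 0"
    if x: "x0 \<in> l2" "x1 \<in> l2" for x0 x1 t
  proof -
    have tx: "(\<lambda>n. t * x1 n) \<in> l2" using l2_scale[OF x(2)] by simp
    have "l2_inner (T10 (\<lambda>n. t * x1 n)) x0 = t * (x1 0 * cnj (x0 1))"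
      using tx by (simp add: T10_app l2_inner_ev_l)
    moreover have "l2_inner (s x0) (\<lambda>n. t * x1 n) = cnj t * l2_inner (s x0) x1"
      using S0_l2[OF s(1) x(1)] x by (simp add: l2_inner_scale_r)
    moreover have "l2_inner (b0 (\<lambda>n. t * x1 n)) (\<lambda>n. t * x1 n) = t * (cnj t * l2_inner (b0 x1) x1)"
      using S0_scale[OF b0(1) x(2)] S0_l2[OF b0(1) x(2)] x tx
      by (simp add: l2_inner_scale_r l2_inner_scale_l S0_l2)
    moreover have "id_op x0 = x0" using x by (simp add: id_l2)
    ultimately show ?thesis using qform[OF P1 x(1) tx] by simp
  qed
  have adj: "l2_inner (s x0) x1 = cnj (x1 0 * cnj (x0 1))" if x: "x0 \<in> l2" "x1 \<in> l2" for x0 x1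
  proof -
    define P where "P = l2_inner x0 x0"
    define AA where "AA = x1 0 * cnj (x0 1)"
    define B where "B = l2_inner (s x0) x1"
    define D where "D = l2_inner (b0 x1) x1"
    have q1: "Im (P + AA + B + D) = 0" using Qt[OF x, of 1] unfolding P_def AA_def B_def D_def by simp
    have q2: "Im (P - AA - B + D) = 0" using Qt[OF x, of "-1"] unfolding P_def AA_def B_def D_def by simp
    have q3: "Im (P + \<i> * AA - \<i> * B + D) = 0" using Qt[OF x, of "\<i>"] unfolding P_def AA_def B_def D_def by simp
    show ?thesis unfolding B_def[symmetric] AA_def[symmetric] using q1 q2 q3
      by (simp add: complex_eq_iff)
  qed
  have e01: "ev 0 1 \<in> l2" "ev 1 1 \<in> l2" using ev_l2 by auto
  have D0: "Re (b0 (ev 0 1) 0) \<ge> 1"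
  proof -
    have "l2_inner (ev 1 1) (ev 1 1) = 1" by (simp add: l2_inner_ev_r ev_self)
    moreover have "l2_inner (s (ev 1 1)) (ev 0 1) = 1" using adj[OF e01(2) e01(1)] by (simp add: ev_def)
    moreover have "l2_inner (b0 (ev 0 1)) (ev 0 1) = b0 (ev 0 1) 0" by (simp add: l2_inner_ev_r)
    moreover have "ev 0 1 0 * cnj (ev 1 1 1) = 1" by (simp add: ev_def)
    ultimately show ?thesis using Qt[OF e01(2) e01(1), of "-1"] by simp
  qed
  obtain lam K where K: "K \<in> K0" and b0eq: "b0 = (\<lambda>f n. lam * id_op f n + K f n)"
    using b0(1) unfolding S0_def by blast
  have bK: "bounded_op K" using K unfolding K0_def by simp
  have "\<forall>e>0. \<exists>S\<in>K0_span. op_norm (\<lambda>f n. K f n - S f n) < e" using K unfolding K0_def by simp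
  from this[rule_format, of "1/2"] obtain S where S: "S \<in> K0_span" "op_norm (\<lambda>f n. K f n - S f n) < 1/2"
    by auto
  obtain F c where F: "finite F" "(0,0) \<notin> F" "S = sop F c"
    using S(1) unfolding K0_span_def sop_def by blast
  define m where "m = Suc (Max (insert 0 (fst ` F)))"
  have m0: "m \<noteq> 0" unfolding m_def by simp
  have mF: "(m,m) \<notin> F"
  proof
    assume "(m,m) \<in> F"
    hence "m \<le> Max (insert 0 (fst ` F))" using F(1) by (intro Max_ge) force+
    thus False unfolding m_def by simp
  qed
  have K00: "cmod (K (ev 0 1) 0) < 1/2" using S(2) unfolding F(3) by (rule diag_approx[OF bK F(1) F(2)])
  have Kmm: "cmod (K (ev m 1) m) < 1/2" using S(2) unfolding F(3) by (rule diag_approx[OF bK F(1) mF])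
  have b0ev: "b0 (ev j 1) j = lam + K (ev j 1) j" for j
    unfolding b0eq using ev_l2 by (simp add: id_l2 ev_self)
  have P2: "op_mat_pos 2 (mat2 id_op T10 s (bm m))"
  proof (rule qformI)
    fix x0 x1 assume x: "x0 \<in> l2" "x1 \<in> l2"
    define AA where "AA = x1 0 * cnj (x0 1)"
    define N0 where "N0 = (\<Sum>n. (cmod (x0 n))^2)"
    define N1 where "N1 = (\<Sum>n. (cmod (x1 n))^2)"
    have evm: "ev m (x1 m) \<in> l2" using ev_l2 by simp
    have t1: "l2_inner (mat2 id_op T10 s (bm m) 0 0 x0) x0 = complex_of_real N0"
      using x by (simp add: id_l2 l2_inner_self N0_def)
    have t2: "l2_inner (mat2 id_op T10 s (bm m) 0 1 x1) x0 = AA"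
      using x by (simp add: T10_app l2_inner_ev_l AA_def)
    have t3: "l2_inner (mat2 id_op T10 s (bm m) 1 0 x0) x1 = cnj AA"
      using adj[OF x] by (simp add: AA_def)
    have t4: "l2_inner (mat2 id_op T10 s (bm m) 1 1 x1) x1 = complex_of_real N1 - complex_of_real ((cmod (x1 m))^2)"
    proof -
      have "l2_inner (mat2 id_op T10 s (bm m) 1 1 x1) x1 = l2_inner x1 x1 - l2_inner (ev m (x1 m)) x1"
        using x evm by (simp add: bm_app l2_inner_diff)
      also have "\<dots> = complex_of_real N1 - x1 m * cnj (x1 m)"
        using x by (simp add: l2_inner_self N1_def l2_inner_ev_l)
      also have "x1 m * cnj (x1 m) = complex_of_real ((cmod (x1 m))^2)" by (simp only: complex_norm_square)
      finally show ?thesis .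
    qed
    have n0: "(cmod (x0 1))^2 \<le> N0" using l2_two[OF x(1), of 1 0] zero_le_power2[of "cmod (x0 0)"] unfolding N0_def by linarith
    have n1: "(cmod (x1 0))^2 + (cmod (x1 m))^2 \<le> N1" using l2_two[OF x(2), of 0 m] m0 unfolding N1_def by simp
    have sq: "0 \<le> (cmod (x0 1))^2 + (cmod (x1 0))^2 + 2 * Re AA"
    proof -
      have "(cmod (x0 1))^2 + (cmod (x1 0))^2 + 2 * Re AA = (Re (x0 1) + Re (x1 0))^2 + (Im (x0 1) + Im (x1 0))^2"
        unfolding AA_def cmod_power2 by (simp add: power2_eq_square algebra_simps)
      thus ?thesis by simp
    qed
    show "Im (l2_inner (mat2 id_op T10 s (bm m) 0 0 x0) x0 + l2_inner (mat2 id_op T10 s (bm m) 0 1 x1) x0 +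
          l2_inner (mat2 id_op T10 s (bm m) 1 0 x0) x1 + l2_inner (mat2 id_op T10 s (bm m) 1 1 x1) x1) = 0 \<and>
        0 \<le> Re (l2_inner (mat2 id_op T10 s (bm m) 0 0 x0) x0 + l2_inner (mat2 id_op T10 s (bm m) 0 1 x1) x0 +
          l2_inner (mat2 id_op T10 s (bm m) 1 0 x0) x1 + l2_inner (mat2 id_op T10 s (bm m) 1 1 x1) x1)"
      unfolding t1 t2 t3 t4 using n0 n1 sq by simp
  qed
  have bmS': "bm m \<in> S0" using bmS m0 by simp
  have "cstar_mat_pos A 2 (\<lambda>i j. phi (mat2 id_op T10 s (bm m) i j))" using P2 pos2 idS T10S s(1) bmS' by blast
  then obtain Y :: "nat \<Rightarrow> nat \<Rightarrow> 'a" where Yc: "Y 0 0 \<in> C" "Y 0 1 \<in> C" "Y 1 0 \<in> C" "Y 1 1 \<in> C"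
    and Y00: "one A = add A (add A (zero A) (mul A (star A (Y 0 0)) (Y 0 0))) (mul A (star A (Y 1 0)) (Y 1 0))"
    and Y01: "a = add A (add A (zero A) (mul A (star A (Y 0 0)) (Y 0 1))) (mul A (star A (Y 1 0)) (Y 1 1))"
    and Y11: "phi (bm m) = add A (add A (zero A) (mul A (star A (Y 0 1)) (Y 0 1))) (mul A (star A (Y 1 1)) (Y 1 1))"
    unfolding cstar2 mat2_simps one a_def[symmetric] by blast
  define w0 where "w0 = add A (Y 0 1) (scale A (-1) (mul A (Y 0 0) a))"
  define w1 where "w1 = add A (Y 1 1) (scale A (-1) (mul A (Y 1 0) a))"
  have cw: "w0 \<in> C" "w1 \<in> C" unfolding w0_def w1_def using Yc ca by simp_all
  have sch: "add A (scale A (-1) (mul A (star A a) a)) (phi (bm m)) =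
     add A (add A (zero A) (mul A (star A w0) w0)) (mul A (star A w1) w1)"
    unfolding w0_def w1_def by (rule schur[OF Yc Y01 Y00 Y11])
  define r where "r = (\<lambda>f n. (-1) * b0 f n + bm m f n)"
  have rS: "r \<in> S0"
  proof -
    have "(\<lambda>f n. (-1) * K f n + sop {(m,m)} (\<lambda>_. -1) f n) \<in> K0"
      by (rule K0_comb[OF K sop_K0_span]) (use m0 in auto)
    hence "(\<lambda>f n. (1 - lam) * id_op f n + (\<lambda>f n. (-1) * K f n + sop {(m,m)} (\<lambda>_. -1) f n) f n) \<in> S0"
      by (rule S0I)
    moreover have "(\<lambda>f n. (1 - lam) * id_op f n + (\<lambda>f n. (-1) * K f n + sop {(m,m)} (\<lambda>_. -1) f n) f n) = r"
      unfolding r_def b0eq bm_def by (intro ext) (simp add: algebra_simps)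
    ultimately show ?thesis by simp
  qed
  have phir: "phi r = add A (add A (zero A) (mul A (star A w0) w0)) (mul A (star A w1) w1)"
    unfolding r_def lin[OF b0(1) bmS'] b0(2) sch[symmetric] ..
  have Zc: "phi (\<lambda>f n. 0) \<in> C" using ZS surj by blast
  have Z: "phi (\<lambda>f n. 0) = zero A"
  proof -
    have "phi (\<lambda>f n. 0) = add A (scale A (-1) (phi (\<lambda>f n. 0))) (phi (\<lambda>f n. 0))"
      using lin[OF ZS ZS, of "-1"] by simp
    also have "\<dots> = zero A" using Zc add_comm add_neg by (metis c_scale)
    finally show ?thesis .
  qed
  have "cstar_mat_pos A 2 (\<lambda>i j. phi (mat2 r (\<lambda>f n. 0) (\<lambda>f n. 0) (\<lambda>f n. 0) i j))"
    unfolding cstar2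
    by (rule exI[of _ "\<lambda>k j. if j = 0 then (if k = 0 then w0 else w1) else zero A"])
       (simp add: Z phir cw)
  hence P3: "op_mat_pos 2 (mat2 r (\<lambda>f n. 0) (\<lambda>f n. 0) (\<lambda>f n. 0))" using pos2 rS ZS by blast
  have em: "ev m 1 \<in> l2" using ev_l2 by simp
  have "0 \<le> Re (l2_inner (r (ev m 1)) (ev m 1))"
    using qform[OF P3 em conjunct1[OF zero_l2]] by (simp add: l2_inner_zero)
  moreover have "l2_inner (r (ev m 1)) (ev m 1) = - (lam + K (ev m 1) m)"
    unfolding r_def using em by (simp add: l2_inner_ev_r b0ev bm_app ev_self)
  ultimately have Rm: "Re (lam + K (ev m 1) m) \<le> 0" by simp
  have "Re (lam + K (ev 0 1) 0) \<ge> 1" using D0 b0ev by simp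
  moreover have "\<bar>Re (K (ev 0 1) 0)\<bar> < 1/2" using K00 abs_Re_le_cmod order.strict_trans1 by blast
  moreover have "\<bar>Re (K (ev m 1) m)\<bar> < 1/2" using Kmm abs_Re_le_cmod order.strict_trans1 by blast
  ultimately show False using Rm by simp
qed

theorem theorem4p2:
  fixes A :: "'a cstar_alg"
  assumes "unital_cstar_algebra A"
  shows "\<not> (\<exists>phi. ucoi_S0 phi A)"
proof
  assume "\<exists>phi. ucoi_S0 phi A"
  then obtain phi where "ucoi_S0 phi A" by blast
  interpret cst A by (rule cst.intro) (rule assms)
  show False by (rule main_false) fact
qed


end
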